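(* Let $\mathbf{I}$ be countable and $\delta>0$. Consider the multivariate age dependent Hawkes process with hard refractory period, i.e. the time homogeneous counting process with generic intensities $$\phi^i(x)=\psi^i\Big(\sum_{j\in\mathbf{I}}\int_{-\infty}^0h^i_j(-s)\,dx^j_s\Big)\mathbf{1}_{a^i(x)>\delta},$$ where $a^i(x)=-\sup\{t^i_k\in x: t^i_k<0\}$ (and $a^i(x)=+\infty$ if $x$ has no point of index $i$). Assume that each $h^i_j$ is non-negative, non-increasing and in $L^1$, and that for every $i$, $\sum_{j\in\mathbf{I}}\|h^i_j\|_1<\infty$ and $\sum_{j\in\mathbf{I}}h^i_j(0)<\infty$. For each $i$ let $(\omega^i_k)_{k\ge1}$ be subsets of $\mathbf{I}$ with $\omega^i_1=\{i\}$, $\omega^i_k\subset\omega^i_{k+1}$, $\bigcup_k\omega^i_k=\mathbf{I}$, let $v^i_k=\omega^i_k\times[-k\delta,0)$ and $\mathbf{V}^i=\mathbf{V}^i_{nested}=\{v^i_k:k\ge1\}$, and let $\mathcal{Y}=\mathcal{X}^{>\delta}=\{x\in\mathcal{X}:t^i_{n+1}-t^i_n>\delta\ \forall i,n\}$. 1. If each $\psi^i$ is increasing, non-negative and continuous, then with $\Delta^i_1(x)=\Delta^i_{v^i_1}(x)=\psi^i(0)\mathbf{1}_{a^i(x)>\delta}$ and, for $k\ge2$, $$\Delta^i_k(x)=\Delta^i_{v^i_k}(x)=\Big[\psi^i\Big(\sum_{j\in\omega^i_k}\int_{-k\delta}^0h^i_j(-s)dx^j_s\Big)-\psi^i\Big(\sum_{j\in\omega^i_{k-1}}\int_{-(k-1)\delta}^0h^i_j(-s)dx^j_s\Big)\Big]\mathbf{1}_{a^i(x)>\delta},$$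 the functions $\Delta^i_k$ are non-negative, cylindrical on $v^i_k$, and $\phi^i(x)=\sum_{k\ge1}\Delta^i_k(x)$ for $x\in\mathcal{X}^{>\delta}$; consequently, for any probabilities $\lambda^i$ on $\mathbf{V}^i$ with $\lambda^i(v)=0$ only if $\sup_{x\in\mathcal{X}^{>\delta}}\Delta^i_v(x)=0$, the process admits a Kalikow decomposition w.r.t. $(\mathbf{V}^i)$ and $\mathcal{X}^{>\delta}$ with weights $\lambda^i$ and $\phi^i_v=\Delta^i_v/\lambda^i(v)$ (convention $0/0=0$). 2. If in addition each $\psi^i$ is $L$-Lipschitz, then for any constants $\Gamma^i_1\ge\bar\Gamma^i_1:=\psi^i(0)$ and, for $k\ge2$, $$\Gamma^i_k\ge\bar\Gamma^i_k:=L\Big[\sum_{j\in\omega^i_k\setminus\omega^i_{k-1}}\big(h^i_j(0)+\delta^{-1}\|h^i_j\|_1\big)+\sum_{j\in\omega^i_{k-1}}h^i_j((k-1)\delta)\Big]$$ with $\Gamma^i:=\sum_{k\ge1}\Gamma^i_k<\infty$, one has $\sup_{x\in\mathcal{X}^{>\delta}}\Delta^i_k(x)\le\Gamma^i_k$; hence (when $\Gamma^i\neq0$) choosing $\lambda^i(v^i_k)=\Gamma^i_k/\Gamma^i$ and $\phi^i_{v^i_k}=\frac{\Gamma^i}{\Gamma^i_k}\Delta^i_k$ gives a Kalikow decomposition w.r.t. $(\mathbf{V}^i)$ and $\mathcal{X}^{>\delta}$ in which all $\phi^i_v$ and $\phi^i$ are bounded by $\Gamma^i$ on $\mathcal{X}^{>\delta}$.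 Moreover $\sum_{k\ge1}\bar\Gamma^i_k\le\psi^i(0)+2L\big[\sum_{j\in\mathbf{I}}h^i_j(0)+\delta^{-1}\sum_{j\in\mathbf{I}}\|h^i_j\|_1\big]$, so $\Gamma^i_k=\bar\Gamma^i_k$ is a valid choice.
   Context: $\mathcal{X}$ is the set of configurations $x=(\{t^i_n\}_n)_{i\in\mathbf{I}}$ of locally finite point sets in $(-\infty,0)$ (points indexed increasingly in $n$), $dx^j_s=\sum_n\delta_{t^j_n}(ds)$, and $\int_a^b$ means integration over $[a,b)$. A neighborhood is a Borel subset $v\subset\mathbf{I}\times(-\infty,0)$; $f$ is cylindrical on $v$ if $f(x)=f(y)$ whenever $x,y$ have the same points in $v$. A time homogeneous counting process with generic intensity $\phi^i:\mathcal{X}\to\mathbb{R}_+$ has stochastic intensity at time $t$ equal to $\phi^i$ of the past configuration before $t$ shifted so that $t$ becomes $0$. Kalikow decomposition w.r.t. $(\mathbf{V}^i)$ and $\mathcal{Y}$: for each $i$ a probability $\lambda^i$ on $\mathbf{V}^i$ and functions $\phi^i_v\ge0$ cylindrical on $v$ with $\phi^i(x)=\sum_{v\in\mathbf{V}^i}\lambda^i(v)\phi^i_v(x)$ for all $x\in\mathcal{X}\cap\mathcal{Y}$. *)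

theory Defs
  imports "HOL-Analysis.Analysis" "HOL-Library.Countable_Set"
begin

text \<open>A configuration assigns to each index i the set of points of type i
(all in (-infty,0)). Locally finite: finitely many points in each bounded [a,0).\<close>

type_synonym 'i conf = "'i \<Rightarrow> real set"

definition confs :: "'i conf set" where
  "confs = {x. \<forall>i. x i \<subseteq> {..<0} \<and> (\<forall>a. finite (x i \<inter> {a..<0}))}"

definition pts :: "'i conf \<Rightarrow> ('i \<times> real) set" where
  "pts x = {(j, t). t \<in> x j}"

definition cylindrical :: "('i \<times> real) set \<Rightarrow> ('i conf \<Rightarrow> real) \<Rightarrow> bool" where
  "cylindrical v f \<longleftrightarrow>
     (\<forall>x\<in>confs. \<forall>y\<in>confs. pts x \<inter> v = pts y \<inter> v \<longrightarrow> f x = f y)"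

definition confs_sep :: "real \<Rightarrow> 'i conf set" where
  "confs_sep \<delta> = {x \<in> confs. \<forall>i. \<forall>s\<in>x i. \<forall>t\<in>x i. s < t \<longrightarrow> t - s > \<delta>}"

definition age :: "'i conf \<Rightarrow> 'i \<Rightarrow> ereal" where
  "age x i = (if x i = {} then \<infinity> else ereal (- Sup (x i)))"

definition refr :: "real \<Rightarrow> 'i conf \<Rightarrow> 'i \<Rightarrow> real" where
  "refr \<delta> x i = (if age x i > ereal \<delta> then 1 else 0)"

text \<open>Integral over [a,0) of g(-s) dx^j_s (sum over the points of x j in [a,0)).\<close>
definition cint :: "(real \<Rightarrow> real) \<Rightarrow> real set \<Rightarrow> real \<Rightarrow> real" where
  "cint g xj a = (\<Sum>\<^sub>\<infinity>t\<in>xj \<inter> {a..<0}. g (- t))"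

definition cint_all :: "(real \<Rightarrow> real) \<Rightarrow> real set \<Rightarrow> real" where
  "cint_all g xj = (\<Sum>\<^sub>\<infinity>t\<in>xj \<inter> {..<0}. g (- t))"

definition hawkes_phi ::
  "('i \<Rightarrow> real \<Rightarrow> real) \<Rightarrow> ('i \<Rightarrow> 'i \<Rightarrow> real \<Rightarrow> real) \<Rightarrow> real \<Rightarrow> 'i \<Rightarrow> 'i conf \<Rightarrow> real" where
  "hawkes_phi \<psi> h \<delta> i x = \<psi> i (\<Sum>\<^sub>\<infinity>j. cint_all (h i j) (x j)) * refr \<delta> x i"

definition nbh :: "('i \<Rightarrow> nat \<Rightarrow> 'i set) \<Rightarrow> real \<Rightarrow> 'i \<Rightarrow> nat \<Rightarrow> ('i \<times> real) set" where
  "nbh \<omega> \<delta> i k = \<omega> i k \<times> {- (real k * \<delta>)..<0}"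

definition Vnest :: "('i \<Rightarrow> nat \<Rightarrow> 'i set) \<Rightarrow> real \<Rightarrow> 'i \<Rightarrow> ('i \<times> real) set set" where
  "Vnest \<omega> \<delta> i = nbh \<omega> \<delta> i ` {1..}"

definition nbh_idx :: "('i \<Rightarrow> nat \<Rightarrow> 'i set) \<Rightarrow> real \<Rightarrow> 'i \<Rightarrow> ('i \<times> real) set \<Rightarrow> nat" where
  "nbh_idx \<omega> \<delta> i v = (THE k. k \<ge> 1 \<and> v = nbh \<omega> \<delta> i k)"

definition Ssum :: "('i \<Rightarrow> 'i \<Rightarrow> real \<Rightarrow> real) \<Rightarrow> ('i \<Rightarrow> nat \<Rightarrow> 'i set) \<Rightarrow> real \<Rightarrow> 'i \<Rightarrow> nat \<Rightarrow> 'i conf \<Rightarrow> real" where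
  "Ssum h \<omega> \<delta> i k x = (\<Sum>\<^sub>\<infinity>j\<in>\<omega> i k. cint (h i j) (x j) (- (real k * \<delta>)))"

definition Delta ::
  "('i \<Rightarrow> real \<Rightarrow> real) \<Rightarrow> ('i \<Rightarrow> 'i \<Rightarrow> real \<Rightarrow> real) \<Rightarrow> ('i \<Rightarrow> nat \<Rightarrow> 'i set) \<Rightarrow> real
     \<Rightarrow> 'i \<Rightarrow> nat \<Rightarrow> 'i conf \<Rightarrow> real" where
  "Delta \<psi> h \<omega> \<delta> i k x =
     (if k = 1 then \<psi> i 0 * refr \<delta> x i
      else (\<psi> i (Ssum h \<omega> \<delta> i k x) - \<psi> i (Ssum h \<omega> \<delta> i (k - 1) x)) * refr \<delta> x i)"

definition Delta_v ::
  "('i \<Rightarrow> real \<Rightarrow> real) \<Rightarrow> ('i \<Rightarrow> 'i \<Rightarrow> real \<Rightarrow> real) \<Rightarrow> ('i \<Rightarrow> nat \<Rightarrow> 'i set) \<Rightarrow> real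
     \<Rightarrow> 'i \<Rightarrow> ('i \<times> real) set \<Rightarrow> 'i conf \<Rightarrow> real" where
  "Delta_v \<psi> h \<omega> \<delta> i v x = Delta \<psi> h \<omega> \<delta> i (nbh_idx \<omega> \<delta> i v) x"

definition L1norm :: "(real \<Rightarrow> real) \<Rightarrow> real" where
  "L1norm g = (LINT t:{0..}|lborel. \<bar>g t\<bar>)"

definition kalikow_at ::
  "('i \<Rightarrow> ('i \<times> real) set set) \<Rightarrow> 'i conf set \<Rightarrow> ('i \<Rightarrow> 'i conf \<Rightarrow> real)
     \<Rightarrow> ('i \<Rightarrow> ('i \<times> real) set \<Rightarrow> real) \<Rightarrow> ('i \<Rightarrow> ('i \<times> real) set \<Rightarrow> 'i conf \<Rightarrow> real) \<Rightarrow> 'i \<Rightarrow> bool" where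
  "kalikow_at V Y phi lam phiv i \<longleftrightarrow>
     (\<forall>v\<in>V i. 0 \<le> lam i v) \<and> (lam i has_sum 1) (V i) \<and>
     (\<forall>v\<in>V i. (\<forall>x\<in>confs \<inter> Y. 0 \<le> phiv i v x) \<and> cylindrical v (phiv i v)) \<and>
     (\<forall>x\<in>confs \<inter> Y. ((\<lambda>v. lam i v * phiv i v x) has_sum phi i x) (V i))"

definition kalikow where
  "kalikow V Y phi lam phiv \<longleftrightarrow> (\<forall>i. kalikow_at V Y phi lam phiv i)"

definition Gbar ::
  "('i \<Rightarrow> real \<Rightarrow> real) \<Rightarrow> ('i \<Rightarrow> 'i \<Rightarrow> real \<Rightarrow> real) \<Rightarrow> ('i \<Rightarrow> nat \<Rightarrow> 'i set) \<Rightarrow> real \<Rightarrow> real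
     \<Rightarrow> 'i \<Rightarrow> nat \<Rightarrow> real" where
  "Gbar \<psi> h \<omega> \<delta> L i k =
     (if k = 1 then \<psi> i 0
      else L * ((\<Sum>\<^sub>\<infinity>j\<in>\<omega> i k - \<omega> i (k - 1). h i j 0 + L1norm (h i j) / \<delta>)
              + (\<Sum>\<^sub>\<infinity>j\<in>\<omega> i (k - 1). h i j (real (k - 1) * \<delta>))))"

end

theory Submission
  imports Defs
begin

lemma gen_int_bound:
  fixes g :: "real \<Rightarrow> real" and \<delta> :: real and Q :: "real set"
  assumes dpos: "\<delta> > 0"
    and gnn: "\<And>t. t \<ge> 0 \<Longrightarrow> g t \<ge> 0"
    and gdec: "\<And>s t. 0 \<le> s \<Longrightarrow> s \<le> t \<Longrightarrow> g t \<le> g s"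
    and gint: "set_integrable lborel {0..} g"
    and fin: "finite Q" and Qge: "Q \<subseteq> {\<delta>..}"
    and sep: "\<And>s s'. s \<in> Q \<Longrightarrow> s' \<in> Q \<Longrightarrow> s < s' \<Longrightarrow> \<delta> \<le> s' - s"
  shows "\<delta> * sum g Q \<le> L1norm g"
proof -
  define I where "I s = {s - \<delta>..<s}" for s :: real
  define F where "F t = (\<Sum>s\<in>Q. indicator (I s) t * g s)" for t
  have intI: "integrable lborel (\<lambda>t. indicator (I s) t * g s)" for s
    unfolding I_def by (intro integrable_mult_left integrable_real_indicator) (use dpos in \<open>auto simp: emeasure_lborel_Ico\<close>)
  have intF: "integrable lborel F" unfolding F_def using intI by auto
  have int1: "(\<integral>t. indicator (I s) t * g s \<partial>lborel) = \<delta> * g s" for s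
    unfolding I_def using dpos by (simp add: mult.commute)
  have "\<delta> * sum g Q = (\<Sum>s\<in>Q. \<integral>t. indicator (I s) t * g s \<partial>lborel)"
    by (subst int1) (simp add: sum_distrib_left)
  also have "\<dots> = integral\<^sup>L lborel F"
    unfolding F_def using intI by (simp add: Bochner_Integration.integral_sum)
  also have "\<dots> \<le> (\<integral>t. indicator {0..} t * \<bar>g t\<bar> \<partial>lborel)"
  proof (rule integral_mono[OF intF])
    have "integrable lborel (\<lambda>t. \<bar>indicator {0..} t * g t\<bar>)"
      using gint unfolding set_integrable_def by (intro integrable_abs) simp
    then show "integrable lborel (\<lambda>t. indicator {0..} t * \<bar>g t\<bar>)"
      by (simp add: abs_mult)
  next
    fix t :: real
    show "F t \<le> indicator {0..} t * \<bar>g t\<bar>"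
    proof (cases "\<exists>s\<in>Q. t \<in> I s")
      case False
      then have "F t = 0" unfolding F_def by (auto intro!: sum.neutral)
      then show ?thesis by simp
    next
      case True
      then obtain s where s: "s \<in> Q" "t \<in> I s" by blast
      have others: "s' \<in> Q \<Longrightarrow> s' \<noteq> s \<Longrightarrow> t \<notin> I s'" for s'
      proof
        assume "s' \<in> Q" "s' \<noteq> s" "t \<in> I s'"
        then show False using sep[of s s'] sep[of s' s] s unfolding I_def
          by (cases "s < s'") auto
      qed
      have "F t = indicator (I s) t * g s + (\<Sum>s'\<in>Q-{s}. indicator (I s') t * g s')"
        unfolding F_def by (rule sum.remove[OF fin s(1)])
      also have "(\<Sum>s'\<in>Q-{s}. indicator (I s') t * g s') = 0"
        using others by (intro sum.neutral) auto
      finally have "F t = g s" using s by simp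
      moreover have "t \<ge> 0" "t \<le> s" using s Qge unfolding I_def by auto
      ultimately show ?thesis using gdec[of t s] gnn[of t] by simp
    qed
  qed
  also have "\<dots> = L1norm g" unfolding L1norm_def set_lebesgue_integral_def by simp
  finally show ?thesis .
qed

lemma sub_single:
  fixes S :: "real set"
  assumes "\<And>s t. s \<in> S \<Longrightarrow> t \<in> S \<Longrightarrow> s < t \<Longrightarrow> \<delta> < t - s"
    and "\<And>s t. s \<in> S \<Longrightarrow> t \<in> S \<Longrightarrow> s < t \<Longrightarrow> t - s \<le> \<delta>"
  shows "S = {} \<or> (\<exists>u. S = {u})"
proof (cases "S = {}")
  case False
  then obtain u where u: "u \<in> S" by blast
  have "t = u" if "t \<in> S" for t
    using assms[of t u] assms[of u t] u that by (cases t u rule: linorder_cases) auto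
  then show ?thesis using u by blast
qed simp

lemma sum_sub_single:
  fixes S :: "real set"
  assumes "S = {} \<or> (\<exists>u. S = {u})" "\<And>u. u \<in> S \<Longrightarrow> f u \<le> c" "0 \<le> c"
  shows "sum f S \<le> c"
  using assms by auto

lemma key_bound:
  fixes g :: "real \<Rightarrow> real" and \<delta> :: real and P :: "real set"
  assumes dpos: "\<delta> > 0"
    and gnn: "\<And>t. t \<ge> 0 \<Longrightarrow> g t \<ge> 0"
    and gdec: "\<And>s t. 0 \<le> s \<Longrightarrow> s \<le> t \<Longrightarrow> g t \<le> g s"
    and gint: "set_integrable lborel {0..} g"
    and fin: "finite P" and Pneg: "P \<subseteq> {..<0}"
    and sep: "\<And>s t. s \<in> P \<Longrightarrow> t \<in> P \<Longrightarrow> s < t \<Longrightarrow> \<delta> < t - s"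
  shows "(\<Sum>t\<in>P. g (- t)) \<le> g 0 + L1norm g / \<delta>"
proof -
  define P1 where "P1 = {t\<in>P. - \<delta> < t}"
  define P2 where "P2 = P - P1"
  have split: "(\<Sum>t\<in>P. g (- t)) = (\<Sum>t\<in>P1. g (- t)) + (\<Sum>t\<in>P2. g (- t))"
  proof -
    have "P1 \<subseteq> P" by (auto simp: P1_def)
    from sum.subset_diff[OF this fin, of "\<lambda>t. g (- t)"] show ?thesis by (simp add: P2_def)
  qed
  have b1: "(\<Sum>t\<in>P1. g (- t)) \<le> g 0"
  proof (rule sum_sub_single)
    show "P1 = {} \<or> (\<exists>u. P1 = {u})"
      by (rule sub_single[of _ \<delta>]) (use sep Pneg in \<open>auto simp: P1_def\<close>)
    show "g (- u) \<le> g 0" if "u \<in> P1" for u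
      using that Pneg gdec[of 0 "-u"] by (auto simp: P1_def)
  qed (simp add: gnn)
  have "(\<Sum>t\<in>P2. g (- t)) = sum g (uminus ` P2)"
    by (simp add: sum.reindex inj_on_def)
  moreover have "\<delta> * sum g (uminus ` P2) \<le> L1norm g"
  proof (rule gen_int_bound[OF dpos gnn gdec gint])
    show "finite (uminus ` P2)" using fin by (simp add: P2_def)
    show "uminus ` P2 \<subseteq> {\<delta>..}" by (auto simp: P2_def P1_def)
    show "\<delta> \<le> s' - s" if "s \<in> uminus ` P2" "s' \<in> uminus ` P2" "s < s'" for s s'
      using that sep[of "-s'" "-s"] by (auto simp: P2_def)
  qed
  ultimately have "(\<Sum>t\<in>P2. g (- t)) \<le> L1norm g / \<delta>"
    using dpos by (simp add: pos_le_divide_eq mult.commute)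
  with split b1 show ?thesis by linarith
qed

lemma window_bound:
  fixes g :: "real \<Rightarrow> real" and \<delta> a :: real and P :: "real set"
  assumes gnn: "\<And>t. t \<ge> 0 \<Longrightarrow> g t \<ge> 0"
    and gdec: "\<And>s t. 0 \<le> s \<Longrightarrow> s \<le> t \<Longrightarrow> g t \<le> g s"
    and a: "0 \<le> a"
    and sep: "\<And>s t. s \<in> P \<Longrightarrow> t \<in> P \<Longrightarrow> s < t \<Longrightarrow> \<delta> < t - s"
  shows "(\<Sum>t\<in>P \<inter> {- (a + \<delta>)..<- a}. g (- t)) \<le> g a"
proof (rule sum_sub_single)
  show "P \<inter> {- (a + \<delta>)..<- a} = {} \<or> (\<exists>u. P \<inter> {- (a + \<delta>)..<- a} = {u})"
    by (rule sub_single[of _ \<delta>]) (use sep in auto)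
qed (use gdec gnn a in auto)

lemma grid_bound:
  fixes g :: "real \<Rightarrow> real" and \<delta> :: real and K :: "nat set"
  assumes dpos: "\<delta> > 0"
    and gnn: "\<And>t. t \<ge> 0 \<Longrightarrow> g t \<ge> 0"
    and gdec: "\<And>s t. 0 \<le> s \<Longrightarrow> s \<le> t \<Longrightarrow> g t \<le> g s"
    and gint: "set_integrable lborel {0..} g"
    and fin: "finite K" and K2: "K \<subseteq> {2..}"
  shows "(\<Sum>k\<in>K. g (real (k - 1) * \<delta>)) \<le> L1norm g / \<delta>"
proof -
  have inj: "inj_on (\<lambda>k. real (k - 1) * \<delta>) K"
    using K2 dpos by (auto simp: inj_on_def)
  have "(\<Sum>k\<in>K. g (real (k - 1) * \<delta>)) = sum g ((\<lambda>k. real (k - 1) * \<delta>) ` K)"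
    using inj by (simp add: sum.reindex)
  moreover have "\<delta> * sum g ((\<lambda>k. real (k - 1) * \<delta>) ` K) \<le> L1norm g"
  proof (rule gen_int_bound[OF dpos gnn gdec gint])
    show "finite ((\<lambda>k. real (k - 1) * \<delta>) ` K)" using fin by simp
    show "(\<lambda>k. real (k - 1) * \<delta>) ` K \<subseteq> {\<delta>..}" using K2 dpos by auto
    show "\<delta> \<le> s' - s" if hs: "s \<in> (\<lambda>k. real (k - 1) * \<delta>) ` K" "s' \<in> (\<lambda>k. real (k - 1) * \<delta>) ` K" "s < s'" for s s'
    proof -
      obtain k where k1: "k \<in> K" "s = real (k - 1) * \<delta>" using hs(1) by blast
      obtain k' where k2: "k' \<in> K" "s' = real (k' - 1) * \<delta>" using hs(2) by blast
      note kk = k1(1) k2(1) k1(2) k2(2)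
      then have "k < k'" using hs K2 dpos by (auto simp: mult_less_cancel_right)
      then have "real (k' - 1) - real (k - 1) \<ge> 1" using kk K2 by auto
      then have "(real (k' - 1) - real (k - 1)) * \<delta> \<ge> 1 * \<delta>" using dpos by (intro mult_right_mono) auto
      then show ?thesis using kk by (simp add: algebra_simps)
    qed
  qed
  ultimately show ?thesis using dpos by (simp add: pos_le_divide_eq mult.commute)
qed


lemma finite_in_chain:
  fixes B :: "nat \<Rightarrow> 'a set"
  assumes "finite G" "G \<subseteq> (\<Union>n. B n)" "\<And>m n. m \<le> n \<Longrightarrow> B m \<subseteq> B n"
  shows "\<exists>N. G \<subseteq> B N"
  using assms(1,2)
proof (induction G rule: finite_induct)
  case empty then show ?case by simp
next
  case (insert a G)
  then obtain N where N: "G \<subseteq> B N" by auto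
  from insert obtain M where M: "a \<in> B M" by auto
  have "G \<subseteq> B (max N M)" "a \<in> B (max N M)"
    using N M assms(3)[of N "max N M"] assms(3)[of M "max N M"] by auto
  then show ?case by blast
qed

lemma confs_fin: "x \<in> confs \<Longrightarrow> finite (x j \<inter> {a..<0})"
  by (simp add: confs_def)

lemma confs_neg: "x \<in> confs \<Longrightarrow> x j \<subseteq> {..<0}"
  by (simp add: confs_def)

lemma confs_sep_D: "x \<in> confs_sep \<delta> \<Longrightarrow> s \<in> x j \<Longrightarrow> t \<in> x j \<Longrightarrow> s < t \<Longrightarrow> \<delta> < t - s"
  by (auto simp: confs_sep_def)

lemma cint_finite: "x \<in> confs \<Longrightarrow> cint g (x j) a = (\<Sum>t\<in>x j \<inter> {a..<0}. g (- t))"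
  by (simp add: cint_def confs_fin)

lemma refr_char:
  assumes x: "x \<in> confs"
  shows "refr \<delta> x i = (if x i \<inter> {- \<delta>..<0} = {} then 1 else 0)"
proof (cases "x i = {}")
  case True then show ?thesis by (simp add: refr_def age_def)
next
  case False
  then obtain p where p: "p \<in> x i" by blast
  have neg: "x i \<subseteq> {..<0}" using confs_neg[OF x] .
  define m where "m = Max (x i \<inter> {p..<0})"
  have fin: "finite (x i \<inter> {p..<0})" using confs_fin[OF x] .
  have pin: "p \<in> x i \<inter> {p..<0}" using p neg by auto
  have m_in: "m \<in> x i" using Max_in[OF fin] pin unfolding m_def by blast
  have m_max: "q \<le> m" if "q \<in> x i" for q
  proof (cases "p \<le> q")
    case True then have "q \<in> x i \<inter> {p..<0}" using that neg by auto
    then show ?thesis unfolding m_def using fin by simp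
  next
    case False then have "q < p" by simp
    also have "p \<le> m" unfolding m_def using fin pin by simp
    finally show ?thesis by simp
  qed
  have Sup: "Sup (x i) = m" by (rule cSup_eq_maximum[OF m_in m_max])
  show ?thesis
  proof (cases "x i \<inter> {- \<delta>..<0} = {}")
    case True
    then have "m < - \<delta>" using m_in neg by force
    then show ?thesis using True False by (simp add: refr_def age_def Sup)
  next
    case F2: False
    then obtain t where t: "t \<in> x i" "- \<delta> \<le> t" by auto
    then have "- \<delta> \<le> m" using m_max[OF t(1)] by simp
    then show ?thesis using F2 False by (simp add: refr_def age_def Sup)
  qed
qed

lemma infsum_incr_tendsto:
  fixes F :: "'a \<Rightarrow> real"
  assumes sm: "F summable_on A" and nn: "\<And>a. a \<in> A \<Longrightarrow> F a \<ge> 0"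
    and sub: "\<And>n. B n \<subseteq> A" and mon: "\<And>m n. m \<le> n \<Longrightarrow> B m \<subseteq> B n"
    and cover: "\<And>a. a \<in> A \<Longrightarrow> \<exists>n. a \<in> B n"
  shows "(\<lambda>n. infsum F (B n)) \<longlonglongrightarrow> infsum F A"
proof (rule LIMSEQ_I)
  fix r :: real assume r: "r > 0"
  obtain G where G: "finite G" "G \<subseteq> A" "dist (sum F G) (infsum F A) \<le> r / 2"
    using infsum_finite_approximation[OF sm, of "r/2"] r by (metis half_gt_zero)
  have GU: "G \<subseteq> (\<Union>n. B n)" using G(2) cover by blast
  have "\<exists>N. G \<subseteq> B N" by (rule finite_in_chain[OF G(1) GU]) (erule mon)
  then obtain N where N: "G \<subseteq> B N" by (elim exE)
  have smB: "F summable_on B n" for n using summable_on_subset_banach[OF sm sub] .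
  show "\<exists>no. \<forall>n\<ge>no. norm (infsum F (B n) - infsum F A) < r"
  proof (intro exI allI impI)
    fix n assume n: "N \<le> n"
    have GB: "G \<subseteq> B n" using N mon[OF n] by blast
    have nnB: "\<And>a. a \<in> B n \<Longrightarrow> 0 \<le> F a" using nn sub by blast
    have "sum F G = infsum F G" using G(1) by simp
    also have "\<dots> \<le> infsum F (B n)"
      by (rule infsum_mono2) (use G(1) smB GB nnB in auto)
    finally have lo: "sum F G \<le> infsum F (B n)" .
    have hi: "infsum F (B n) \<le> infsum F A"
      by (rule infsum_mono2) (use smB sm sub nn in blast)+
    show "norm (infsum F (B n) - infsum F A) < r"
      using lo hi G(3) r by (simp add: dist_real_def)
  qed
qed


locale hk =
  fixes \<psi> :: "'i \<Rightarrow> real \<Rightarrow> real"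
    and h :: "'i \<Rightarrow> 'i \<Rightarrow> real \<Rightarrow> real"
    and \<omega> :: "'i \<Rightarrow> nat \<Rightarrow> 'i set"
    and \<delta> :: real
  assumes delta_pos: "\<delta> > 0"
    and h_nonneg: "\<And>i j t. t \<ge> 0 \<Longrightarrow> h i j t \<ge> 0"
    and h_noninc: "\<And>i j s t. 0 \<le> s \<Longrightarrow> s \<le> t \<Longrightarrow> h i j t \<le> h i j s"
    and h_L1: "\<And>i j. set_integrable lborel {0..} (h i j)"
    and h_norm_sum: "\<And>i. (\<lambda>j. L1norm (h i j)) summable_on UNIV"
    and h_zero_sum: "\<And>i. (\<lambda>j. h i j 0) summable_on UNIV"
    and om1: "\<And>i. \<omega> i 1 = {i}"
    and om_mono: "\<And>i k. k \<ge> 1 \<Longrightarrow> \<omega> i k \<subseteq> \<omega> i (Suc k)"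
    and om_union: "\<And>i. (\<Union>k\<in>{1..}. \<omega> i k) = UNIV"
    and psi_mono: "\<And>i. mono (\<psi> i)"
    and psi_nonneg: "\<And>i u. \<psi> i u \<ge> 0"
    and psi_cont: "\<And>i. continuous_on UNIV (\<psi> i)"
begin

definition bnd where "bnd i j = h i j 0 + L1norm (h i j) / \<delta>"

lemma om_chain:
  assumes "1 \<le> m" "m \<le> n" shows "\<omega> i m \<subseteq> \<omega> i n"
  using assms(2)
proof (induction n rule: dec_induct)
  case (step n)
  then show ?case using om_mono[of n i] assms(1) by auto
qed simp

lemma i_in_om: "1 \<le> k \<Longrightarrow> i \<in> \<omega> i k"
  using om_chain[of 1 k i] om1[of i] by auto

lemma L1_nonneg: "0 \<le> L1norm (h i j)"
  unfolding L1norm_def set_lebesgue_integral_def by (intro integral_nonneg_AE) auto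

lemma bnd_nonneg: "0 \<le> bnd i j"
  unfolding bnd_def using h_nonneg[of 0 i j] L1_nonneg[of i j] delta_pos by simp

lemma bnd_summable: "(\<lambda>j. bnd i j) summable_on A"
proof -
  have "(\<lambda>j. h i j 0 + L1norm (h i j) * inverse \<delta>) summable_on UNIV"
    by (intro summable_on_add h_zero_sum summable_on_cmult_left h_norm_sum)
  then show ?thesis unfolding bnd_def divide_inverse
    by (rule summable_on_subset_banach) simp
qed

lemma cint_nonneg: "x \<in> confs \<Longrightarrow> 0 \<le> cint (h i j) (x j) a"
  using confs_neg[of x j] by (auto simp: cint_finite intro!: sum_nonneg h_nonneg)

lemma cint_le_bnd:
  assumes x: "x \<in> confs \<inter> confs_sep \<delta>"
  shows "cint (h i j) (x j) a \<le> bnd i j"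
  unfolding bnd_def using x
  by (simp add: cint_finite, intro key_bound[OF delta_pos h_nonneg h_noninc h_L1])
     (auto simp: confs_fin dest: confs_neg confs_sep_D)

lemma cint_summable:
  assumes x: "x \<in> confs \<inter> confs_sep \<delta>"
  shows "(\<lambda>j. cint (h i j) (x j) a) summable_on A"
  by (rule summable_on_comparison_test[OF bnd_summable]) (use x cint_le_bnd cint_nonneg in auto)

lemma cint_mono:
  assumes x: "x \<in> confs" and ab: "a \<le> b"
  shows "cint (h i j) (x j) b \<le> cint (h i j) (x j) a"
  using x ab confs_neg[OF x, of j]
  by (simp add: cint_finite, intro sum_mono2) (auto simp: confs_fin intro!: h_nonneg)


lemma refr_01: "refr \<delta> x i = 0 \<or> refr \<delta> x i = 1"
  by (simp add: refr_def)

lemma refr_nonneg: "0 \<le> refr \<delta> x i"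
  by (simp add: refr_def)

lemma Ssum_mono:
  assumes x: "x \<in> confs \<inter> confs_sep \<delta>" and k: "1 \<le> k"
  shows "Ssum h \<omega> \<delta> i k x \<le> Ssum h \<omega> \<delta> i (Suc k) x"
  unfolding Ssum_def
proof (rule infsum_mono_neutral)
  show "(\<lambda>j. cint (h i j) (x j) (- (real k * \<delta>))) summable_on \<omega> i k" by (rule cint_summable[OF x])
  show "(\<lambda>j. cint (h i j) (x j) (- (real (Suc k) * \<delta>))) summable_on \<omega> i (Suc k)" by (rule cint_summable[OF x])
  show "cint (h i j) (x j) (- (real k * \<delta>)) \<le> cint (h i j) (x j) (- (real (Suc k) * \<delta>))" for j
    by (rule cint_mono) (use x delta_pos in \<open>auto simp: algebra_simps\<close>)
  show "cint (h i j) (x j) (- (real k * \<delta>)) \<le> 0" if "j \<in> \<omega> i k - \<omega> i (Suc k)" for j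
    using that om_mono[OF k, of i] by auto
  show "0 \<le> cint (h i j) (x j) (- (real (Suc k) * \<delta>))" for j
    using x by (intro cint_nonneg) auto
qed

lemma Delta_nonneg:
  assumes x: "x \<in> confs \<inter> confs_sep \<delta>" and k: "1 \<le> k"
  shows "0 \<le> Delta \<psi> h \<omega> \<delta> i k x"
proof (cases "k = 1")
  case True then show ?thesis by (simp add: Delta_def psi_nonneg refr_nonneg)
next
  case False
  then have k2: "k = Suc (k - 1)" "1 \<le> k - 1" using k by auto
  have "Ssum h \<omega> \<delta> i (k - 1) x \<le> Ssum h \<omega> \<delta> i k x"
    using Ssum_mono[OF x k2(2), of i] k2(1) by simp
  then have "\<psi> i (Ssum h \<omega> \<delta> i (k - 1) x) \<le> \<psi> i (Ssum h \<omega> \<delta> i k x)"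
    using psi_mono[of i] by (simp add: monoD)
  then show ?thesis using False by (simp add: Delta_def refr_nonneg)
qed

lemma Delta_cyl:
  assumes k: "1 \<le> k"
  shows "cylindrical (nbh \<omega> \<delta> i k) (Delta \<psi> h \<omega> \<delta> i k)"
  unfolding cylindrical_def
proof (intro ballI impI)
  fix x y :: "'i conf" assume x: "x \<in> confs" and y: "y \<in> confs"
    and eq: "pts x \<inter> nbh \<omega> \<delta> i k = pts y \<inter> nbh \<omega> \<delta> i k"
  have mem: "t \<in> z j \<inter> {- (real k * \<delta>)..<0} \<longleftrightarrow> (j, t) \<in> pts z \<inter> nbh \<omega> \<delta> i k"
    if "j \<in> \<omega> i k" for z :: "'i conf" and j t
    using that by (simp add: pts_def nbh_def)
  have W: "x j \<inter> {- (real k * \<delta>)..<0} = y j \<inter> {- (real k * \<delta>)..<0}" if "j \<in> \<omega> i k" for j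
    using mem[OF that, of _ x] mem[OF that, of _ y] eq by blast
  have sub: "x j \<inter> {a..<0} = y j \<inter> {a..<0}" if "j \<in> \<omega> i k" "- (real k * \<delta>) \<le> a" for j a
  proof -
    have "x j \<inter> {a..<0} = (x j \<inter> {- (real k * \<delta>)..<0}) \<inter> {a..<0}" using that(2) by auto
    also have "\<dots> = (y j \<inter> {- (real k * \<delta>)..<0}) \<inter> {a..<0}" using W[OF that(1)] by simp
    also have "\<dots> = y j \<inter> {a..<0}" using that(2) by auto
    finally show ?thesis .
  qed
  have kd: "- (real k * \<delta>) \<le> - \<delta>" using k delta_pos by simp
  have r: "refr \<delta> x i = refr \<delta> y i"
    using sub[OF i_in_om[OF k] kd] by (simp add: refr_char[OF x] refr_char[OF y])
  have Sk: "Ssum h \<omega> \<delta> i k x = Ssum h \<omega> \<delta> i k y"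
    unfolding Ssum_def cint_def by (intro infsum_cong) (simp add: sub)
  have Sk1: "Ssum h \<omega> \<delta> i (k - 1) x = Ssum h \<omega> \<delta> i (k - 1) y" if "k \<noteq> 1"
  proof -
    have sb: "\<omega> i (k - 1) \<subseteq> \<omega> i k" using om_chain[of "k - 1" k i] that k by simp
    have le: "- (real k * \<delta>) \<le> - (real (k - 1) * \<delta>)" using delta_pos that k by (simp add: mult_right_mono)
    show ?thesis
      unfolding Ssum_def cint_def using sb le by (intro infsum_cong) (simp add: sub subsetD)
  qed
  show "Delta \<psi> h \<omega> \<delta> i k x = Delta \<psi> h \<omega> \<delta> i k y"
    unfolding Delta_def using r Sk Sk1 by simp
qed

lemma S1_zero:
  assumes x: "x \<in> confs" and r: "refr \<delta> x i = 1"
  shows "Ssum h \<omega> \<delta> i 1 x = 0"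
proof -
  have "x i \<inter> {- \<delta>..<0} = {}" using r refr_char[OF x, of \<delta> i] by (auto split: if_splits)
  then show ?thesis unfolding Ssum_def om1 by (simp add: cint_def)
qed

end
context hk begin

lemma inner_summable:
  assumes x: "x \<in> confs \<inter> confs_sep \<delta>"
  shows "(\<lambda>t. h i j (- t)) summable_on (x j \<inter> {..<0})"
    and "cint_all (h i j) (x j) \<le> bnd i j"
    and "0 \<le> cint_all (h i j) (x j)"
proof -
  have fs: "sum (\<lambda>t. h i j (- t)) F \<le> bnd i j" if "finite F" "F \<subseteq> x j \<inter> {..<0}" for F
    unfolding bnd_def
    by (rule key_bound[OF delta_pos h_nonneg h_noninc h_L1 that(1)])
       (use that x in \<open>auto dest: confs_sep_D\<close>)
  show sm: "(\<lambda>t. h i j (- t)) summable_on (x j \<inter> {..<0})"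
  proof (rule nonneg_bdd_above_summable_on)
    show "0 \<le> h i j (- t)" if "t \<in> x j \<inter> {..<0}" for t using that by (intro h_nonneg) simp
    show "bdd_above (sum (\<lambda>t. h i j (- t)) ` {F. F \<subseteq> x j \<inter> {..<0} \<and> finite F})"
      by (rule bdd_aboveI2[where M="bnd i j"]) (use fs in blast)
  qed
  show "cint_all (h i j) (x j) \<le> bnd i j"
    unfolding cint_all_def by (rule infsum_le_finite_sums[OF sm fs])
  show "0 \<le> cint_all (h i j) (x j)"
    unfolding cint_all_def by (rule infsum_nonneg) (simp add: h_nonneg)
qed

lemma Ssum_lim:
  assumes x: "x \<in> confs \<inter> confs_sep \<delta>"
  shows "(\<lambda>n. Ssum h \<omega> \<delta> i n x) \<longlonglongrightarrow> (\<Sum>\<^sub>\<infinity>j. cint_all (h i j) (x j))"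
proof -
  define F where "F = (\<lambda>(j, t). h i j (- t))"
  define A where "A = Sigma UNIV (\<lambda>j. x j \<inter> {..<0})"
  define B where "B n = Sigma (\<omega> i n) (\<lambda>j. x j \<inter> {- (real n * \<delta>)..<0})" for n
  have Fnn: "0 \<le> F a" if "a \<in> A" for a
    using that by (auto simp: F_def A_def intro!: h_nonneg)
  have outer: "(\<lambda>j. cint_all (h i j) (x j)) summable_on UNIV"
    by (rule summable_on_comparison_test[OF bnd_summable]) (use inner_summable[OF x] in auto)
  have smA: "F summable_on A"
    unfolding A_def
  proof (rule summable_on_SigmaI[OF _ outer])
    show "((\<lambda>y. F (j, y)) has_sum cint_all (h i j) (x j)) (x j \<inter> {..<0})" for j
      unfolding F_def cint_all_def using inner_summable(1)[OF x] by simp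
    show "0 \<le> F (j, t)" if "t \<in> x j \<inter> {..<0}" for j t
      using that by (auto simp: F_def intro!: h_nonneg)
  qed
  have BA: "B n \<subseteq> A" for n by (auto simp: A_def B_def)
  have S_eq: "(\<Sum>\<^sub>\<infinity>j. cint_all (h i j) (x j)) = infsum F A"
    unfolding A_def cint_all_def
    using infsum_Sigma_banach[of F UNIV "\<lambda>j. x j \<inter> {..<0}"] smA
    by (simp add: A_def F_def)
  have Sn_eq: "Ssum h \<omega> \<delta> i n x = infsum F (B n)" for n
  proof -
    have "F summable_on B n" using summable_on_subset_banach[OF smA BA] .
    then show ?thesis
      unfolding Ssum_def cint_def
      using infsum_Sigma_banach[of F "\<omega> i n" "\<lambda>j. x j \<inter> {- (real n * \<delta>)..<0}"]
      by (simp add: B_def F_def)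
  qed
  have mon: "B m \<subseteq> B n" if "m \<le> n" for m n
  proof (cases "m = 0")
    case True then show ?thesis by (simp add: B_def)
  next
    case False
    then have "\<omega> i m \<subseteq> \<omega> i n" using om_chain[of m n i] that by simp
    moreover have "- (real n * \<delta>) \<le> - (real m * \<delta>)" using that delta_pos by (simp add: mult_right_mono)
    ultimately show ?thesis unfolding B_def by auto
  qed
  have cover: "\<exists>n. a \<in> B n" if aA: "a \<in> A" for a
  proof -
    obtain j t where a: "a = (j, t)" "t \<in> x j" "t < 0" using aA by (auto simp: A_def)
    obtain k where k: "k \<in> {1..}" "j \<in> \<omega> i k" using om_union[of i] by blast
    obtain n0 where n0: "- t < real n0 * \<delta>" using ex_less_of_nat_mult[OF delta_pos] by blast
    define n where "n = max k n0"
    have "j \<in> \<omega> i n" using om_chain[of k n i] k by (auto simp: n_def)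
    moreover have "real n0 * \<delta> \<le> real n * \<delta>" using delta_pos by (intro mult_right_mono) (auto simp: n_def)
    ultimately have "a \<in> B n" using a n0 by (auto simp: B_def)
    then show ?thesis by blast
  qed
  show ?thesis
    unfolding S_eq Sn_eq by (rule infsum_incr_tendsto[OF smA Fnn BA mon cover])
qed

end
context hk begin

lemma range_Suc_nat: "range Suc = {1::nat..}"
  by (auto simp: image_iff) (metis Suc_pred' less_eq_Suc_le)

lemma Delta_hassum:
  assumes x: "x \<in> confs \<inter> confs_sep \<delta>"
  shows "((\<lambda>k. Delta \<psi> h \<omega> \<delta> i k x) has_sum hawkes_phi \<psi> h \<delta> i x) {1..}"
proof (cases "refr \<delta> x i = 0")
  case True
  have "\<And>k. Delta \<psi> h \<omega> \<delta> i k x = 0" using True by (simp add: Delta_def)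
  moreover have "hawkes_phi \<psi> h \<delta> i x = 0" using True by (simp add: hawkes_phi_def)
  ultimately show ?thesis by simp
next
  case False
  then have r: "refr \<delta> x i = 1" using refr_01[of x i] by blast
  define S where "S = (\<Sum>\<^sub>\<infinity>j. cint_all (h i j) (x j))"
  define D where "D n = Delta \<psi> h \<omega> \<delta> i (Suc n) x" for n
  have ps: "(\<Sum>n<Suc N. D n) = \<psi> i (Ssum h \<omega> \<delta> i (Suc N) x)" for N
  proof (induction N)
    case 0 then show ?case using S1_zero[of x i] x r by (simp add: D_def Delta_def)
  next
    case (Suc N)
    have "(\<Sum>n<Suc (Suc N). D n) = (\<Sum>n<Suc N. D n) + D (Suc N)" by simp
    also have "\<dots> = \<psi> i (Ssum h \<omega> \<delta> i (Suc (Suc N)) x)"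
      using Suc.IH r by (simp add: D_def Delta_def)
    finally show ?case .
  qed
  have ic: "isCont (\<psi> i) S"
    using psi_cont[of i] continuous_on_eq_continuous_at[of UNIV "\<psi> i"] by simp
  have lim: "(\<lambda>N. \<psi> i (Ssum h \<omega> \<delta> i (Suc N) x)) \<longlonglongrightarrow> \<psi> i S"
    using isCont_tendsto_compose[OF ic LIMSEQ_Suc[OF Ssum_lim[OF x, of i], folded S_def]] .
  have "D sums \<psi> i S"
    unfolding sums_def by (rule LIMSEQ_imp_Suc) (simp only: ps lim)
  then have "(D has_sum \<psi> i S) UNIV"
    by (rule sums_nonneg_imp_has_sum) (use Delta_nonneg[OF x] in \<open>simp add: D_def\<close>)
  then have "((\<lambda>k. Delta \<psi> h \<omega> \<delta> i k x) has_sum \<psi> i S) (range Suc)"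
    by (subst has_sum_reindex) (auto simp: D_def[abs_def] o_def)
  then show ?thesis using r by (simp add: range_Suc_nat hawkes_phi_def S_def)
qed

end

lemma infsum_sum_swap:
  fixes f :: "'k \<Rightarrow> 'a \<Rightarrow> real"
  assumes "finite K" "\<And>k. k \<in> K \<Longrightarrow> f k summable_on A"
  shows "(\<lambda>j. \<Sum>k\<in>K. f k j) summable_on A \<and> infsum (\<lambda>j. \<Sum>k\<in>K. f k j) A = (\<Sum>k\<in>K. infsum (f k) A)"
  using assms
proof (induction K rule: finite_induct)
  case empty then show ?case by simp
next
  case (insert k K)
  then have IH: "(\<lambda>j. \<Sum>k\<in>K. f k j) summable_on A" "infsum (\<lambda>j. \<Sum>k\<in>K. f k j) A = (\<Sum>k\<in>K. infsum (f k) A)"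
    by auto
  have fk: "f k summable_on A" using insert by auto
  show ?case
    using insert(1,2) summable_on_add[OF fk IH(1)] infsum_add[OF fk IH(1)] IH(2) by simp
qed

context hk begin

lemma nbh_idx_nbh:
  assumes k: "1 \<le> k" shows "nbh_idx \<omega> \<delta> i (nbh \<omega> \<delta> i k) = k"
  unfolding nbh_idx_def
proof (rule the_equality)
  show "1 \<le> k \<and> nbh \<omega> \<delta> i k = nbh \<omega> \<delta> i k" using k by simp
  fix k' assume k': "1 \<le> k' \<and> nbh \<omega> \<delta> i k = nbh \<omega> \<delta> i k'"
  have ne1: "\<omega> i k \<noteq> {}" using i_in_om[OF k] by blast
  have ne2: "\<omega> i k' \<noteq> {}" using i_in_om[of k' i] k' by blast
  have p1: "- (real k * \<delta>) < 0" using k delta_pos by simp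
  have p2: "- (real k' * \<delta>) < 0" using k' delta_pos by simp
  have "{- (real k * \<delta>)..<0} = {- (real k' * \<delta>)..<0}"
    using k' ne1 ne2 p1 p2 unfolding nbh_def times_eq_iff by auto
  then have "real k * \<delta> = real k' * \<delta>" using atLeastLessThan_eq_iff[OF p1 p2] by simp
  then show "k' = k" using delta_pos by simp
qed

lemma inj_nbh: "inj_on (nbh \<omega> \<delta> i) {1..}"
  by (rule inj_on_inverseI[where g = "nbh_idx \<omega> \<delta> i"]) (simp add: nbh_idx_nbh)

lemma Delta_v_nbh: "1 \<le> k \<Longrightarrow> Delta_v \<psi> h \<omega> \<delta> i (nbh \<omega> \<delta> i k) x = Delta \<psi> h \<omega> \<delta> i k x"
  by (simp add: Delta_v_def nbh_idx_nbh)

lemma hsm: "(\<lambda>j. h i j a) summable_on A" if "0 \<le> a"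
  by (rule summable_on_comparison_test[OF summable_on_subset_banach[OF h_zero_sum]])
     (use that h_noninc h_nonneg in auto)

lemma Gbar_nonneg:
  assumes L: "0 \<le> L" and k: "1 \<le> k"
  shows "0 \<le> Gbar \<psi> h \<omega> \<delta> L i k"
  unfolding Gbar_def using L delta_pos
  by (auto simp: psi_nonneg intro!: mult_nonneg_nonneg add_nonneg_nonneg infsum_nonneg
           h_nonneg L1_nonneg divide_nonneg_pos)

end
context hk begin

lemma cint_step:
  assumes x: "x \<in> confs \<inter> confs_sep \<delta>" and m: "1 \<le> m"
  shows "cint (h i j) (x j) (- (real (Suc m) * \<delta>)) \<le> cint (h i j) (x j) (- (real m * \<delta>)) + h i j (real m * \<delta>)"
proof -
  have xc: "x \<in> confs" using x by simp
  have md: "0 \<le> real m * \<delta>" using delta_pos by simp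
  define a where "a = real m * \<delta>"
  have a0: "0 \<le> a" using md by (simp add: a_def)
  have ks: "real (Suc m) * \<delta> = a + \<delta>" by (simp add: a_def distrib_right)
  have eq: "x j \<inter> {- (real (Suc m) * \<delta>)..<0} =
      (x j \<inter> {- (real m * \<delta> + \<delta>)..<- (real m * \<delta>)}) \<union> (x j \<inter> {- (real m * \<delta>)..<0})"
    unfolding ks a_def[symmetric] using a0 delta_pos by auto
  have fin1: "finite (x j \<inter> {- (real m * \<delta> + \<delta>)..<- (real m * \<delta>)})"
  proof -
    have "x j \<inter> {- (real m * \<delta> + \<delta>)..<- (real m * \<delta>)} \<subseteq> x j \<inter> {- (real m * \<delta> + \<delta>)..<0}"
      unfolding a_def[symmetric] using a0 by auto
    then show ?thesis using confs_fin[OF xc] finite_subset by blast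
  qed
  have "cint (h i j) (x j) (- (real (Suc m) * \<delta>)) =
      (\<Sum>t\<in>x j \<inter> {- (real m * \<delta> + \<delta>)..<- (real m * \<delta>)}. h i j (- t)) + cint (h i j) (x j) (- (real m * \<delta>))"
    unfolding cint_finite[OF xc] eq
    by (rule sum.union_disjoint) (use fin1 confs_fin[OF xc] in auto)
  also have "(\<Sum>t\<in>x j \<inter> {- (real m * \<delta> + \<delta>)..<- (real m * \<delta>)}. h i j (- t)) \<le> h i j (real m * \<delta>)"
    by (rule window_bound[OF h_nonneg h_noninc md]) (use x in \<open>auto dest: confs_sep_D\<close>)
  finally show ?thesis by simp
qed

lemma Delta_le_Gbar:
  assumes lip: "L-lipschitz_on UNIV (\<psi> i)" and x: "x \<in> confs \<inter> confs_sep \<delta>" and k: "1 \<le> k"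
  shows "Delta \<psi> h \<omega> \<delta> i k x \<le> Gbar \<psi> h \<omega> \<delta> L i k"
proof -
  have L: "0 \<le> L" using lipschitz_on_nonneg[OF lip] .
  show ?thesis
  proof (cases "k = 1")
    case True
    then show ?thesis using refr_01[of x i] psi_nonneg[of i 0] by (auto simp: Delta_def Gbar_def)
  next
    case False
    define m where "m = k - 1"
    have km: "k = Suc m" "1 \<le> m" using False k by (auto simp: m_def)
    show ?thesis
    proof (cases "refr \<delta> x i = 0")
      case True
      then show ?thesis using Gbar_nonneg[OF L k, of i] False by (simp add: Delta_def)
    next
      case r1: False
      then have r: "refr \<delta> x i = 1" using refr_01[of x i] by blast
      define c where "c a j = cint (h i j) (x j) a" for a j
      define D where "D = \<omega> i k - \<omega> i m"
      have om: "\<omega> i k = D \<union> \<omega> i m" "D \<inter> \<omega> i m = {}"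
        using om_mono[OF km(2), of i] km(1) by (auto simp: D_def)
      have md: "0 \<le> real m * \<delta>" using delta_pos by simp
      have csm: "c a summable_on A" for a A unfolding c_def by (rule cint_summable[OF x])
      have Sk: "Ssum h \<omega> \<delta> i k x = infsum (c (- (real k * \<delta>))) D + infsum (c (- (real k * \<delta>))) (\<omega> i m)"
        unfolding Ssum_def c_def[symmetric] om(1) by (rule infsum_Un_disjoint[OF csm csm om(2)])
      have A: "infsum (c (- (real k * \<delta>))) D \<le> infsum (bnd i) D"
        by (rule infsum_mono[OF csm bnd_summable]) (unfold c_def, rule cint_le_bnd[OF x])
      have "infsum (c (- (real k * \<delta>))) (\<omega> i m) \<le> infsum (\<lambda>j. c (- (real m * \<delta>)) j + h i j (real m * \<delta>)) (\<omega> i m)"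
        by (rule infsum_mono[OF csm summable_on_add[OF csm hsm[OF md]]])
           (unfold c_def km(1), rule cint_step[OF x km(2)])
      also have "\<dots> = Ssum h \<omega> \<delta> i m x + infsum (\<lambda>j. h i j (real m * \<delta>)) (\<omega> i m)"
        unfolding Ssum_def c_def
        by (rule infsum_add[OF csm[unfolded c_def] hsm[OF md]])
      finally have B: "infsum (c (- (real k * \<delta>))) (\<omega> i m) \<le> Ssum h \<omega> \<delta> i m x + infsum (\<lambda>j. h i j (real m * \<delta>)) (\<omega> i m)" .
      have mono: "Ssum h \<omega> \<delta> i m x \<le> Ssum h \<omega> \<delta> i k x" using Ssum_mono[OF x km(2), of i] km(1) by simp
      have "\<psi> i (Ssum h \<omega> \<delta> i k x) - \<psi> i (Ssum h \<omega> \<delta> i m x) \<le> L * dist (Ssum h \<omega> \<delta> i k x) (Ssum h \<omega> \<delta> i m x)"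
        using lipschitz_onD[OF lip, of "Ssum h \<omega> \<delta> i k x" "Ssum h \<omega> \<delta> i m x"] by (simp add: dist_real_def)
      also have "\<dots> = L * (Ssum h \<omega> \<delta> i k x - Ssum h \<omega> \<delta> i m x)" using mono by (simp add: dist_real_def)
      also have "\<dots> \<le> L * (infsum (bnd i) D + infsum (\<lambda>j. h i j (real m * \<delta>)) (\<omega> i m))"
        using Sk A B L by (intro mult_left_mono) auto
      finally have fin: "\<psi> i (Ssum h \<omega> \<delta> i k x) - \<psi> i (Ssum h \<omega> \<delta> i m x)
          \<le> L * (infsum (bnd i) D + infsum (\<lambda>j. h i j (real m * \<delta>)) (\<omega> i m))" .
      have dl: "Delta \<psi> h \<omega> \<delta> i k x = \<psi> i (Ssum h \<omega> \<delta> i k x) - \<psi> i (Ssum h \<omega> \<delta> i m x)"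
        unfolding Delta_def m_def using False r by simp
      have gb: "Gbar \<psi> h \<omega> \<delta> L i k = L * (infsum (bnd i) D + infsum (\<lambda>j. h i j (real m * \<delta>)) (\<omega> i m))"
        unfolding Gbar_def D_def m_def bnd_def[abs_def] using False by simp
      show ?thesis unfolding dl gb by (rule fin)
    qed
  qed
qed

end
context hk begin

lemma Gbar_sum:
  assumes L: "0 \<le> L"
  shows "Gbar \<psi> h \<omega> \<delta> L i summable_on {1..} \<and>
     (\<Sum>\<^sub>\<infinity>k\<in>{1..}. Gbar \<psi> h \<omega> \<delta> L i k)
       \<le> \<psi> i 0 + 2 * L * ((\<Sum>\<^sub>\<infinity>j. h i j 0) + (\<Sum>\<^sub>\<infinity>j. L1norm (h i j)) / \<delta>)"
proof -
  define G where "G = Gbar \<psi> h \<omega> \<delta> L i"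
  define hz where "hz = (\<Sum>\<^sub>\<infinity>j. h i j 0)"
  define hn where "hn = (\<Sum>\<^sub>\<infinity>j. L1norm (h i j))"
  have dv: "(\<lambda>j. L1norm (h i j) / \<delta>) = (\<lambda>j. L1norm (h i j) * inverse \<delta>)"
    by (simp add: divide_inverse)
  have nsm: "(\<lambda>j. L1norm (h i j) / \<delta>) summable_on UNIV"
    unfolding dv by (rule summable_on_cmult_left[OF h_norm_sum])
  have nsum: "(\<Sum>\<^sub>\<infinity>j. L1norm (h i j) / \<delta>) = hn / \<delta>"
    unfolding dv hn_def by (simp add: infsum_cmult_left[OF h_norm_sum] divide_inverse)
  have bsum: "infsum (bnd i) UNIV = hz + hn / \<delta>"
    unfolding bnd_def[abs_def] hz_def using infsum_add[OF h_zero_sum nsm] nsum by simp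
  define C where "C = \<psi> i 0 + L * (hz + hn / \<delta> + hn / \<delta>)"
  define D where "D k = \<omega> i k - \<omega> i (k - 1)" for k
  have Gk: "G k = L * (infsum (bnd i) (D k) + infsum (\<lambda>j. h i j (real (k - 1) * \<delta>)) (\<omega> i (k - 1)))"
    if "k \<noteq> 1" for k
    unfolding G_def Gbar_def D_def bnd_def[abs_def] using that by simp
  have G1: "G 1 = \<psi> i 0" by (simp add: G_def Gbar_def)
  have fsb: "sum G K \<le> C" if K: "finite K" "K \<subseteq> {1..}" for K
  proof -
    define K' where "K' = K - {1}"
    have K'2: "K' \<subseteq> {2..}" using K(2) by (auto simp: K'_def)
    have fK': "finite K'" using K(1) by (simp add: K'_def)
    have s1: "sum G K \<le> \<psi> i 0 + sum G K'"
    proof (cases "1 \<in> K")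
      case True
      then show ?thesis using sum.remove[OF K(1) True, of G] G1 by (simp add: K'_def)
    next
      case False
      then show ?thesis using psi_nonneg[of i 0] by (simp add: K'_def)
    qed
    have s2: "sum G K' = L * ((\<Sum>k\<in>K'. infsum (bnd i) (D k)) + (\<Sum>k\<in>K'. infsum (\<lambda>j. h i j (real (k - 1) * \<delta>)) (\<omega> i (k - 1))))"
    proof -
      have "sum G K' = (\<Sum>k\<in>K'. L * (infsum (bnd i) (D k) + infsum (\<lambda>j. h i j (real (k - 1) * \<delta>)) (\<omega> i (k - 1))))"
        by (rule sum.cong) (auto simp: K'_def Gk)
      then show ?thesis by (simp add: sum_distrib_left sum.distrib distrib_left)
    qed
    have disj: "D k \<inter> D k' = {}" if "k \<in> K'" "k' \<in> K'" "k \<noteq> k'" for k k'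
    proof -
      have gen: "D a \<inter> D b = {}" if "a \<in> K'" "b \<in> K'" "a < b" for a b
      proof -
        have "1 \<le> a" "a \<le> b - 1" using that K'2 by auto
        then have "\<omega> i a \<subseteq> \<omega> i (b - 1)" by (rule om_chain)
        then show ?thesis by (auto simp: D_def)
      qed
      show ?thesis using gen[of k k'] gen[of k' k] that by (cases "k < k'") auto
    qed
    have sA: "(\<Sum>k\<in>K'. infsum (bnd i) (D k)) \<le> hz + hn / \<delta>"
    proof -
      have "(\<Sum>k\<in>K'. infsum (bnd i) (D k)) = infsum (bnd i) (\<Union>k\<in>K'. D k)"
        by (rule sum_infsum[OF fK' bnd_summable disj])
      also have "\<dots> \<le> infsum (bnd i) UNIV"
        by (rule infsum_mono2[OF bnd_summable bnd_summable]) (auto simp: bnd_nonneg)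
      finally show ?thesis using bsum by simp
    qed
    have sB: "(\<Sum>k\<in>K'. infsum (\<lambda>j. h i j (real (k - 1) * \<delta>)) (\<omega> i (k - 1))) \<le> hn / \<delta>"
    proof -
      have "(\<Sum>k\<in>K'. infsum (\<lambda>j. h i j (real (k - 1) * \<delta>)) (\<omega> i (k - 1)))
          \<le> (\<Sum>k\<in>K'. infsum (\<lambda>j. h i j (real (k - 1) * \<delta>)) UNIV)"
        by (intro sum_mono infsum_mono2 hsm) (use delta_pos in \<open>auto intro!: h_nonneg\<close>)
      also have "\<dots> = infsum (\<lambda>j. \<Sum>k\<in>K'. h i j (real (k - 1) * \<delta>)) UNIV"
        using infsum_sum_swap[OF fK', of "\<lambda>k j. h i j (real (k - 1) * \<delta>)" UNIV] hsm delta_pos by simp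
      also have "\<dots> \<le> (\<Sum>\<^sub>\<infinity>j. L1norm (h i j) / \<delta>)"
      proof (rule infsum_mono[OF _ nsm])
        show "(\<lambda>j. \<Sum>k\<in>K'. h i j (real (k - 1) * \<delta>)) summable_on UNIV"
          using infsum_sum_swap[OF fK', of "\<lambda>k j. h i j (real (k - 1) * \<delta>)" UNIV] hsm delta_pos by simp
        show "(\<Sum>k\<in>K'. h i j (real (k - 1) * \<delta>)) \<le> L1norm (h i j) / \<delta>" for j
          by (rule grid_bound[OF delta_pos h_nonneg h_noninc h_L1 fK' K'2])
      qed
      finally show ?thesis using nsum by simp
    qed
    have "sum G K' \<le> L * (hz + hn / \<delta> + hn / \<delta>)"
      unfolding s2 using sA sB L by (intro mult_left_mono) auto
    then show ?thesis using s1 by (simp add: C_def)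
  qed
  have Gnn: "0 \<le> G k" if "k \<in> {1..}" for k using Gbar_nonneg[OF L, of k i] that by (simp add: G_def)
  have sm: "G summable_on {1..}"
  proof (rule nonneg_bdd_above_summable_on)
    show "bdd_above (sum G ` {F. F \<subseteq> {1..} \<and> finite F})"
      by (rule bdd_aboveI2[where M=C]) (use fsb in blast)
  qed (rule Gnn)
  have le: "infsum G {1..} \<le> C" by (rule infsum_le_finite_sums[OF sm fsb])
  have hz0: "0 \<le> hz" unfolding hz_def by (rule infsum_nonneg) (simp add: h_nonneg)
  have "C \<le> \<psi> i 0 + 2 * L * (hz + hn / \<delta>)"
    using mult_nonneg_nonneg[OF L hz0] by (simp add: C_def algebra_simps)
  then show ?thesis using sm le by (simp add: G_def hz_def hn_def)
qed

end

lemma cyl_scale: "cylindrical v f \<Longrightarrow> cylindrical v (\<lambda>x. c * f x)"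
  unfolding cylindrical_def by (intro ballI impI) (drule bspec, assumption, drule bspec, assumption, simp)

lemma cyl_div: "cylindrical v f \<Longrightarrow> cylindrical v (\<lambda>x. f x / c)"
  unfolding cylindrical_def by (intro ballI impI) (drule bspec, assumption, drule bspec, assumption, simp)

context hk begin

lemma Vsum: "(f has_sum s) (Vnest \<omega> \<delta> i) \<longleftrightarrow> ((\<lambda>k. f (nbh \<omega> \<delta> i k)) has_sum s) {1..}"
  unfolding Vnest_def by (subst has_sum_reindex[OF inj_nbh]) (simp add: o_def)

lemma part3:
  assumes lam: "\<forall>v\<in>Vnest \<omega> \<delta> i. 0 \<le> lam i v" "(lam i has_sum 1) (Vnest \<omega> \<delta> i)"
      "\<forall>v\<in>Vnest \<omega> \<delta> i. lam i v = 0 \<longrightarrow>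
                  (SUP x\<in>confs \<inter> confs_sep \<delta>. ereal (Delta_v \<psi> h \<omega> \<delta> i v x)) = 0"
  shows "kalikow_at (Vnest \<omega> \<delta>) (confs_sep \<delta>) (hawkes_phi \<psi> h \<delta>) lam
              (\<lambda>i v x. Delta_v \<psi> h \<omega> \<delta> i v x / lam i v) i"
  unfolding kalikow_at_def
proof (intro conjI ballI)
  show "0 \<le> lam i v" if "v \<in> Vnest \<omega> \<delta> i" for v using lam(1) that by blast
  show "(lam i has_sum 1) (Vnest \<omega> \<delta> i)" by (rule lam(2))
  fix v assume v: "v \<in> Vnest \<omega> \<delta> i"
  then obtain k where k: "1 \<le> k" "v = nbh \<omega> \<delta> i k" by (auto simp: Vnest_def)
  show "0 \<le> Delta_v \<psi> h \<omega> \<delta> i v x / lam i v" if "x \<in> confs \<inter> confs_sep \<delta>" for x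
  proof -
    have "0 \<le> lam i v" using bspec[OF lam(1) v] .
    moreover have "0 \<le> Delta_v \<psi> h \<omega> \<delta> i v x"
      unfolding k(2) Delta_v_nbh[OF k(1)] by (rule Delta_nonneg[OF that k(1)])
    ultimately show ?thesis by (rule divide_nonneg_nonneg[rotated])
  qed
  show "cylindrical v (\<lambda>x. Delta_v \<psi> h \<omega> \<delta> i v x / lam i v)"
    unfolding k(2) Delta_v_nbh[OF k(1)] by (rule cyl_div[OF Delta_cyl[OF k(1)]])
next
  fix x :: "'i conf" assume x: "x \<in> confs \<inter> confs_sep \<delta>"
  have eq: "lam i v * (Delta_v \<psi> h \<omega> \<delta> i v x / lam i v) = Delta_v \<psi> h \<omega> \<delta> i v x"
    if v: "v \<in> Vnest \<omega> \<delta> i" for v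
  proof (cases "lam i v = 0")
    case True
    obtain k where k: "1 \<le> k" "v = nbh \<omega> \<delta> i k" using v by (auto simp: Vnest_def)
    have "ereal (Delta_v \<psi> h \<omega> \<delta> i v x) \<le> (SUP x\<in>confs \<inter> confs_sep \<delta>. ereal (Delta_v \<psi> h \<omega> \<delta> i v x))"
      by (rule SUP_upper[OF x])
    also have "\<dots> = 0" using bspec[OF lam(3) v] True by simp
    finally have "Delta_v \<psi> h \<omega> \<delta> i v x \<le> 0" by simp
    moreover have "0 \<le> Delta_v \<psi> h \<omega> \<delta> i v x"
        unfolding k(2) Delta_v_nbh[OF k(1)] by (rule Delta_nonneg[OF x k(1)])
    ultimately show ?thesis using True by simp
  qed simp
  have "((\<lambda>v. Delta_v \<psi> h \<omega> \<delta> i v x) has_sum hawkes_phi \<psi> h \<delta> i x) (Vnest \<omega> \<delta> i)"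
    unfolding Vsum using Delta_hassum[OF x, of i]
    by (rule has_sum_cong[THEN iffD1, rotated]) (simp add: Delta_v_nbh)
  then show "((\<lambda>v. lam i v * (Delta_v \<psi> h \<omega> \<delta> i v x / lam i v)) has_sum hawkes_phi \<psi> h \<delta> i x) (Vnest \<omega> \<delta> i)"
    by (rule has_sum_cong[THEN iffD1, rotated]) (rule eq[symmetric])
qed

end
context hk begin

lemma part4a:
  assumes lip: "L-lipschitz_on UNIV (\<psi> i)"
    and Gge: "\<forall>k. k \<ge> 1 \<longrightarrow> \<Gamma> i k \<ge> Gbar \<psi> h \<omega> \<delta> L i k"
    and k: "1 \<le> k"
  shows "(SUP x\<in>confs \<inter> confs_sep \<delta>. ereal (Delta \<psi> h \<omega> \<delta> i k x)) \<le> ereal (\<Gamma> i k)"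
proof (rule SUP_least)
  fix x :: "'i conf" assume x: "x \<in> confs \<inter> confs_sep \<delta>"
  have "Delta \<psi> h \<omega> \<delta> i k x \<le> Gbar \<psi> h \<omega> \<delta> L i k" by (rule Delta_le_Gbar[OF lip x k])
  also have "\<dots> \<le> \<Gamma> i k" using Gge k by blast
  finally show "ereal (Delta \<psi> h \<omega> \<delta> i k x) \<le> ereal (\<Gamma> i k)" by simp
qed

lemma part4b:
  assumes lip: "L-lipschitz_on UNIV (\<psi> i)"
    and Gge: "\<forall>k. k \<ge> 1 \<longrightarrow> \<Gamma> i k \<ge> Gbar \<psi> h \<omega> \<delta> L i k"
    and Gsm: "\<Gamma> i summable_on {1..}"
    and G0: "(\<Sum>\<^sub>\<infinity>k\<in>{1..}. \<Gamma> i k) \<noteq> 0"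
  shows "kalikow_at (Vnest \<omega> \<delta>) (confs_sep \<delta>) (hawkes_phi \<psi> h \<delta>)
                (\<lambda>i v. \<Gamma> i (nbh_idx \<omega> \<delta> i v) / (\<Sum>\<^sub>\<infinity>k\<in>{1..}. \<Gamma> i k))
                (\<lambda>i v x. (\<Sum>\<^sub>\<infinity>k\<in>{1..}. \<Gamma> i k) / \<Gamma> i (nbh_idx \<omega> \<delta> i v)
                           * Delta_v \<psi> h \<omega> \<delta> i v x) i \<and>
              (\<forall>v\<in>Vnest \<omega> \<delta> i. \<forall>x\<in>confs \<inter> confs_sep \<delta>.
                 (\<Sum>\<^sub>\<infinity>k\<in>{1..}. \<Gamma> i k) / \<Gamma> i (nbh_idx \<omega> \<delta> i v) * Delta_v \<psi> h \<omega> \<delta> i v x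
                   \<le> (\<Sum>\<^sub>\<infinity>k\<in>{1..}. \<Gamma> i k)) \<and>
              (\<forall>x\<in>confs \<inter> confs_sep \<delta>. hawkes_phi \<psi> h \<delta> i x \<le> (\<Sum>\<^sub>\<infinity>k\<in>{1..}. \<Gamma> i k))"
proof -
  define G where "G = (\<Sum>\<^sub>\<infinity>k\<in>{1..}. \<Gamma> i k)"
  have L: "0 \<le> L" using lipschitz_on_nonneg[OF lip] .
  have Gk_nn: "0 \<le> \<Gamma> i k" if "1 \<le> k" for k
    using Gbar_nonneg[OF L that, of i] Gge that by force
  have DG: "Delta \<psi> h \<omega> \<delta> i k x \<le> \<Gamma> i k" if "x \<in> confs \<inter> confs_sep \<delta>" "1 \<le> k" for k x
    using Delta_le_Gbar[OF lip that] Gge that(2) by force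
  have Gpos: "0 < G"
  proof -
    have "0 \<le> G" unfolding G_def by (rule infsum_nonneg) (use Gk_nn in auto)
    then show ?thesis using G0 by (simp add: G_def)
  qed
  have Ghs: "(\<Gamma> i has_sum G) {1..}" unfolding G_def using Gsm by (rule has_sum_infsum)
  have idx: "nbh_idx \<omega> \<delta> i (nbh \<omega> \<delta> i k) = k" if "1 \<le> k" for k using nbh_idx_nbh[OF that] .
  have cancel: "\<Gamma> i k / G * (G / \<Gamma> i k * Delta \<psi> h \<omega> \<delta> i k x) = Delta \<psi> h \<omega> \<delta> i k x"
    if x: "x \<in> confs \<inter> confs_sep \<delta>" and k: "1 \<le> k" for k x
  proof (cases "\<Gamma> i k = 0")
    case True
    then have "Delta \<psi> h \<omega> \<delta> i k x = 0" using DG[OF x k] Delta_nonneg[OF x k, of i] by simp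
    then show ?thesis by simp
  qed (use Gpos in simp)
  have bound: "G / \<Gamma> i k * Delta \<psi> h \<omega> \<delta> i k x \<le> G"
    if x: "x \<in> confs \<inter> confs_sep \<delta>" and k: "1 \<le> k" for k x
  proof (cases "\<Gamma> i k = 0")
    case True then show ?thesis using Gpos by simp
  next
    case False
    then have gp: "0 < \<Gamma> i k" using Gk_nn[OF k] by simp
    have "G / \<Gamma> i k * Delta \<psi> h \<omega> \<delta> i k x \<le> G / \<Gamma> i k * \<Gamma> i k"
      using DG[OF x k] Gpos gp by (intro mult_left_mono) auto
    also have "\<dots> = G" using gp by simp
    finally show ?thesis .
  qed
  have K0: "kalikow_at (Vnest \<omega> \<delta>) (confs_sep \<delta>) (hawkes_phi \<psi> h \<delta>)
                (\<lambda>i v. \<Gamma> i (nbh_idx \<omega> \<delta> i v) / G)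
                (\<lambda>i v x. G / \<Gamma> i (nbh_idx \<omega> \<delta> i v) * Delta_v \<psi> h \<omega> \<delta> i v x) i"
    unfolding kalikow_at_def
  proof (intro conjI ballI)
    fix v assume v: "v \<in> Vnest \<omega> \<delta> i"
    then obtain k where k: "1 \<le> k" "v = nbh \<omega> \<delta> i k" by (auto simp: Vnest_def)
    show "0 \<le> \<Gamma> i (nbh_idx \<omega> \<delta> i v) / G"
      unfolding k(2) idx[OF k(1)] using Gk_nn[OF k(1)] Gpos by simp
    show "0 \<le> G / \<Gamma> i (nbh_idx \<omega> \<delta> i v) * Delta_v \<psi> h \<omega> \<delta> i v x" if x: "x \<in> confs \<inter> confs_sep \<delta>" for x
      unfolding k(2) idx[OF k(1)] Delta_v_nbh[OF k(1)]
      using Gk_nn[OF k(1)] Gpos Delta_nonneg[OF x k(1), of i] by simp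
    show "cylindrical v (\<lambda>x. G / \<Gamma> i (nbh_idx \<omega> \<delta> i v) * Delta_v \<psi> h \<omega> \<delta> i v x)"
      unfolding k(2) idx[OF k(1)] Delta_v_nbh[OF k(1)] by (rule cyl_scale[OF Delta_cyl[OF k(1)]])
  next
    have "((\<lambda>k. inverse G * \<Gamma> i k) has_sum inverse G * G) {1..}"
      by (rule has_sum_cmult_right[OF Ghs])
    then have "((\<lambda>k. \<Gamma> i k / G) has_sum 1) {1..}" using Gpos by (simp add: field_simps)
    then show "((\<lambda>v. \<Gamma> i (nbh_idx \<omega> \<delta> i v) / G) has_sum 1) (Vnest \<omega> \<delta> i)"
      unfolding Vsum by (rule has_sum_cong[THEN iffD1, rotated]) (simp add: idx)
  next
    fix x :: "'i conf" assume x: "x \<in> confs \<inter> confs_sep \<delta>"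
    show "((\<lambda>v. \<Gamma> i (nbh_idx \<omega> \<delta> i v) / G * (G / \<Gamma> i (nbh_idx \<omega> \<delta> i v) * Delta_v \<psi> h \<omega> \<delta> i v x))
            has_sum hawkes_phi \<psi> h \<delta> i x) (Vnest \<omega> \<delta> i)"
      unfolding Vsum using Delta_hassum[OF x, of i]
    proof (rule has_sum_cong[THEN iffD1, rotated])
      fix k :: nat assume "k \<in> {1..}"
      then have k1: "1 \<le> k" by simp
      show "Delta \<psi> h \<omega> \<delta> i k x = \<Gamma> i (nbh_idx \<omega> \<delta> i (nbh \<omega> \<delta> i k)) / G *
          (G / \<Gamma> i (nbh_idx \<omega> \<delta> i (nbh \<omega> \<delta> i k)) * Delta_v \<psi> h \<omega> \<delta> i (nbh \<omega> \<delta> i k) x)"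
        unfolding idx[OF k1] Delta_v_nbh[OF k1] using cancel[OF x k1] by simp
    qed
  qed
  have K: "kalikow_at (Vnest \<omega> \<delta>) (confs_sep \<delta>) (hawkes_phi \<psi> h \<delta>)
                (\<lambda>i v. \<Gamma> i (nbh_idx \<omega> \<delta> i v) / (\<Sum>\<^sub>\<infinity>k\<in>{1..}. \<Gamma> i k))
                (\<lambda>i v x. (\<Sum>\<^sub>\<infinity>k\<in>{1..}. \<Gamma> i k) / \<Gamma> i (nbh_idx \<omega> \<delta> i v)
                           * Delta_v \<psi> h \<omega> \<delta> i v x) i"
    using K0 unfolding kalikow_at_def G_def .
  have B1: "\<forall>v\<in>Vnest \<omega> \<delta> i. \<forall>x\<in>confs \<inter> confs_sep \<delta>.
      G / \<Gamma> i (nbh_idx \<omega> \<delta> i v) * Delta_v \<psi> h \<omega> \<delta> i v x \<le> G"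
  proof (intro ballI)
    fix v and x :: "'i conf" assume v: "v \<in> Vnest \<omega> \<delta> i" and x: "x \<in> confs \<inter> confs_sep \<delta>"
    then obtain k where k: "1 \<le> k" "v = nbh \<omega> \<delta> i k" by (auto simp: Vnest_def)
    show "G / \<Gamma> i (nbh_idx \<omega> \<delta> i v) * Delta_v \<psi> h \<omega> \<delta> i v x \<le> G"
      unfolding k(2) idx[OF k(1)] Delta_v_nbh[OF k(1)] by (rule bound[OF x k(1)])
  qed
  have B2: "\<forall>x\<in>confs \<inter> confs_sep \<delta>. hawkes_phi \<psi> h \<delta> i x \<le> G"
  proof
    fix x :: "'i conf" assume x: "x \<in> confs \<inter> confs_sep \<delta>"
    show "hawkes_phi \<psi> h \<delta> i x \<le> G"
      by (rule has_sum_mono[OF Delta_hassum[OF x] Ghs]) (use DG[OF x] in auto)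
  qed
  show ?thesis
  proof (intro conjI)
    show "kalikow_at (Vnest \<omega> \<delta>) (confs_sep \<delta>) (hawkes_phi \<psi> h \<delta>)
                (\<lambda>i v. \<Gamma> i (nbh_idx \<omega> \<delta> i v) / (\<Sum>\<^sub>\<infinity>k\<in>{1..}. \<Gamma> i k))
                (\<lambda>i v x. (\<Sum>\<^sub>\<infinity>k\<in>{1..}. \<Gamma> i k) / \<Gamma> i (nbh_idx \<omega> \<delta> i v)
                           * Delta_v \<psi> h \<omega> \<delta> i v x) i" by (rule K)
    show "\<forall>v\<in>Vnest \<omega> \<delta> i. \<forall>x\<in>confs \<inter> confs_sep \<delta>.
                 (\<Sum>\<^sub>\<infinity>k\<in>{1..}. \<Gamma> i k) / \<Gamma> i (nbh_idx \<omega> \<delta> i v) * Delta_v \<psi> h \<omega> \<delta> i v x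
                   \<le> (\<Sum>\<^sub>\<infinity>k\<in>{1..}. \<Gamma> i k)" using B1 unfolding G_def .
    show "\<forall>x\<in>confs \<inter> confs_sep \<delta>. hawkes_phi \<psi> h \<delta> i x \<le> (\<Sum>\<^sub>\<infinity>k\<in>{1..}. \<Gamma> i k)"
      using B2 unfolding G_def .
  qed
qed

end
theorem mainTheorem4:
  fixes \<psi> :: "'i::countable \<Rightarrow> real \<Rightarrow> real"
    and h :: "'i \<Rightarrow> 'i \<Rightarrow> real \<Rightarrow> real"
    and \<omega> :: "'i \<Rightarrow> nat \<Rightarrow> 'i set"
    and \<delta> L :: real
  assumes delta_pos: "\<delta> > 0"
    and h_nonneg: "\<And>i j t. t \<ge> 0 \<Longrightarrow> h i j t \<ge> 0"
    and h_noninc: "\<And>i j s t. 0 \<le> s \<Longrightarrow> s \<le> t \<Longrightarrow> h i j t \<le> h i j s"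
    and h_L1: "\<And>i j. set_integrable lborel {0..} (h i j)"
    and h_norm_sum: "\<And>i. (\<lambda>j. L1norm (h i j)) summable_on UNIV"
    and h_zero_sum: "\<And>i. (\<lambda>j. h i j 0) summable_on UNIV"
    and om1: "\<And>i. \<omega> i 1 = {i}"
    and om_mono: "\<And>i k. k \<ge> 1 \<Longrightarrow> \<omega> i k \<subseteq> \<omega> i (Suc k)"
    and om_union: "\<And>i. (\<Union>k\<in>{1..}. \<omega> i k) = UNIV"
    and psi_mono: "\<And>i. mono (\<psi> i)"
    and psi_nonneg: "\<And>i u. \<psi> i u \<ge> 0"
    and psi_cont: "\<And>i. continuous_on UNIV (\<psi> i)"
  shows
    "(\<forall>i k. k \<ge> 1 \<longrightarrow>
        (\<forall>x\<in>confs \<inter> confs_sep \<delta>. 0 \<le> Delta \<psi> h \<omega> \<delta> i k x) \<and>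
        cylindrical (nbh \<omega> \<delta> i k) (Delta \<psi> h \<omega> \<delta> i k)) \<and>
     (\<forall>i. \<forall>x\<in>confs \<inter> confs_sep \<delta>.
        ((\<lambda>k. Delta \<psi> h \<omega> \<delta> i k x) has_sum hawkes_phi \<psi> h \<delta> i x) {1..}) \<and>
     (\<forall>lam. (\<forall>i. (\<forall>v\<in>Vnest \<omega> \<delta> i. 0 \<le> lam i v) \<and> (lam i has_sum 1) (Vnest \<omega> \<delta> i) \<and>
               (\<forall>v\<in>Vnest \<omega> \<delta> i. lam i v = 0 \<longrightarrow>
                  (SUP x\<in>confs \<inter> confs_sep \<delta>. ereal (Delta_v \<psi> h \<omega> \<delta> i v x)) = 0))
        \<longrightarrow> kalikow (Vnest \<omega> \<delta>) (confs_sep \<delta>) (hawkes_phi \<psi> h \<delta>) lam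
              (\<lambda>i v x. Delta_v \<psi> h \<omega> \<delta> i v x / lam i v)) \<and>
     ((\<forall>i. L-lipschitz_on UNIV (\<psi> i)) \<longrightarrow> (
       (\<forall>\<Gamma> :: 'i \<Rightarrow> nat \<Rightarrow> real.
          (\<forall>i k. k \<ge> 1 \<longrightarrow> \<Gamma> i k \<ge> Gbar \<psi> h \<omega> \<delta> L i k) \<and>
          (\<forall>i. \<Gamma> i summable_on {1..})
          \<longrightarrow>
          (\<forall>i k. k \<ge> 1 \<longrightarrow>
              (SUP x\<in>confs \<inter> confs_sep \<delta>. ereal (Delta \<psi> h \<omega> \<delta> i k x)) \<le> ereal (\<Gamma> i k)) \<and>
          (\<forall>i. (\<Sum>\<^sub>\<infinity>k\<in>{1..}. \<Gamma> i k) \<noteq> 0 \<longrightarrow>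
              kalikow_at (Vnest \<omega> \<delta>) (confs_sep \<delta>) (hawkes_phi \<psi> h \<delta>)
                (\<lambda>i v. \<Gamma> i (nbh_idx \<omega> \<delta> i v) / (\<Sum>\<^sub>\<infinity>k\<in>{1..}. \<Gamma> i k))
                (\<lambda>i v x. (\<Sum>\<^sub>\<infinity>k\<in>{1..}. \<Gamma> i k) / \<Gamma> i (nbh_idx \<omega> \<delta> i v)
                           * Delta_v \<psi> h \<omega> \<delta> i v x) i \<and>
              (\<forall>v\<in>Vnest \<omega> \<delta> i. \<forall>x\<in>confs \<inter> confs_sep \<delta>.
                 (\<Sum>\<^sub>\<infinity>k\<in>{1..}. \<Gamma> i k) / \<Gamma> i (nbh_idx \<omega> \<delta> i v) * Delta_v \<psi> h \<omega> \<delta> i v x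
                   \<le> (\<Sum>\<^sub>\<infinity>k\<in>{1..}. \<Gamma> i k)) \<and>
              (\<forall>x\<in>confs \<inter> confs_sep \<delta>. hawkes_phi \<psi> h \<delta> i x \<le> (\<Sum>\<^sub>\<infinity>k\<in>{1..}. \<Gamma> i k)))) \<and>
       (\<forall>i. Gbar \<psi> h \<omega> \<delta> L i summable_on {1..} \<and>
          (\<Sum>\<^sub>\<infinity>k\<in>{1..}. Gbar \<psi> h \<omega> \<delta> L i k)
            \<le> \<psi> i 0 + 2 * L * ((\<Sum>\<^sub>\<infinity>j. h i j 0) + (\<Sum>\<^sub>\<infinity>j. L1norm (h i j)) / \<delta>))))"
  proof -
  interpret hk \<psi> h \<omega> \<delta>
    by unfold_locales (rule assms; assumption)+
  have P1: "\<forall>i k. k \<ge> 1 \<longrightarrow>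
        (\<forall>x\<in>confs \<inter> confs_sep \<delta>. 0 \<le> Delta \<psi> h \<omega> \<delta> i k x) \<and>
        cylindrical (nbh \<omega> \<delta> i k) (Delta \<psi> h \<omega> \<delta> i k)"
  proof (intro allI impI conjI ballI)
    fix i and k :: nat and x :: "'i conf" assume k: "1 \<le> k" and x: "x \<in> confs \<inter> confs_sep \<delta>"
    show "0 \<le> Delta \<psi> h \<omega> \<delta> i k x" by (rule Delta_nonneg[OF x k])
  next
    fix i and k :: nat assume k: "1 \<le> k"
    show "cylindrical (nbh \<omega> \<delta> i k) (Delta \<psi> h \<omega> \<delta> i k)" by (rule Delta_cyl[OF k])
  qed
  have P2: "\<forall>i. \<forall>x\<in>confs \<inter> confs_sep \<delta>.
        ((\<lambda>k. Delta \<psi> h \<omega> \<delta> i k x) has_sum hawkes_phi \<psi> h \<delta> i x) {1..}"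
    by (intro allI ballI Delta_hassum)
  have P3: "\<forall>lam. (\<forall>i. (\<forall>v\<in>Vnest \<omega> \<delta> i. 0 \<le> lam i v) \<and> (lam i has_sum 1) (Vnest \<omega> \<delta> i) \<and>
               (\<forall>v\<in>Vnest \<omega> \<delta> i. lam i v = 0 \<longrightarrow>
                  (SUP x\<in>confs \<inter> confs_sep \<delta>. ereal (Delta_v \<psi> h \<omega> \<delta> i v x)) = 0))
        \<longrightarrow> kalikow (Vnest \<omega> \<delta>) (confs_sep \<delta>) (hawkes_phi \<psi> h \<delta>) lam
              (\<lambda>i v x. Delta_v \<psi> h \<omega> \<delta> i v x / lam i v)"
  proof (intro allI impI)
    fix lam :: "'i \<Rightarrow> ('i \<times> real) set \<Rightarrow> real"
    assume H: "\<forall>i. (\<forall>v\<in>Vnest \<omega> \<delta> i. 0 \<le> lam i v) \<and> (lam i has_sum 1) (Vnest \<omega> \<delta> i) \<and>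
               (\<forall>v\<in>Vnest \<omega> \<delta> i. lam i v = 0 \<longrightarrow>
                  (SUP x\<in>confs \<inter> confs_sep \<delta>. ereal (Delta_v \<psi> h \<omega> \<delta> i v x)) = 0)"
    show "kalikow (Vnest \<omega> \<delta>) (confs_sep \<delta>) (hawkes_phi \<psi> h \<delta>) lam
              (\<lambda>i v x. Delta_v \<psi> h \<omega> \<delta> i v x / lam i v)"
      unfolding kalikow_def
    proof
      fix i
      have Hi: "(\<forall>v\<in>Vnest \<omega> \<delta> i. 0 \<le> lam i v)" "(lam i has_sum 1) (Vnest \<omega> \<delta> i)"
        "(\<forall>v\<in>Vnest \<omega> \<delta> i. lam i v = 0 \<longrightarrow>
                  (SUP x\<in>confs \<inter> confs_sep \<delta>. ereal (Delta_v \<psi> h \<omega> \<delta> i v x)) = 0)"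
        using spec[OF H, of i] by blast+
      show "kalikow_at (Vnest \<omega> \<delta>) (confs_sep \<delta>) (hawkes_phi \<psi> h \<delta>) lam
              (\<lambda>i v x. Delta_v \<psi> h \<omega> \<delta> i v x / lam i v) i"
        by (rule part3[where lam=lam and i=i, OF Hi])
    qed
  qed
  have P4: "(\<forall>i. L-lipschitz_on UNIV (\<psi> i)) \<longrightarrow> (
       (\<forall>\<Gamma> :: 'i \<Rightarrow> nat \<Rightarrow> real.
          (\<forall>i k. k \<ge> 1 \<longrightarrow> \<Gamma> i k \<ge> Gbar \<psi> h \<omega> \<delta> L i k) \<and>
          (\<forall>i. \<Gamma> i summable_on {1..})
          \<longrightarrow>
          (\<forall>i k. k \<ge> 1 \<longrightarrow>
              (SUP x\<in>confs \<inter> confs_sep \<delta>. ereal (Delta \<psi> h \<omega> \<delta> i k x)) \<le> ereal (\<Gamma> i k)) \<and>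
          (\<forall>i. (\<Sum>\<^sub>\<infinity>k\<in>{1..}. \<Gamma> i k) \<noteq> 0 \<longrightarrow>
              kalikow_at (Vnest \<omega> \<delta>) (confs_sep \<delta>) (hawkes_phi \<psi> h \<delta>)
                (\<lambda>i v. \<Gamma> i (nbh_idx \<omega> \<delta> i v) / (\<Sum>\<^sub>\<infinity>k\<in>{1..}. \<Gamma> i k))
                (\<lambda>i v x. (\<Sum>\<^sub>\<infinity>k\<in>{1..}. \<Gamma> i k) / \<Gamma> i (nbh_idx \<omega> \<delta> i v)
                           * Delta_v \<psi> h \<omega> \<delta> i v x) i \<and>
              (\<forall>v\<in>Vnest \<omega> \<delta> i. \<forall>x\<in>confs \<inter> confs_sep \<delta>.
                 (\<Sum>\<^sub>\<infinity>k\<in>{1..}. \<Gamma> i k) / \<Gamma> i (nbh_idx \<omega> \<delta> i v) * Delta_v \<psi> h \<omega> \<delta> i v x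
                   \<le> (\<Sum>\<^sub>\<infinity>k\<in>{1..}. \<Gamma> i k)) \<and>
              (\<forall>x\<in>confs \<inter> confs_sep \<delta>. hawkes_phi \<psi> h \<delta> i x \<le> (\<Sum>\<^sub>\<infinity>k\<in>{1..}. \<Gamma> i k)))) \<and>
       (\<forall>i. Gbar \<psi> h \<omega> \<delta> L i summable_on {1..} \<and>
          (\<Sum>\<^sub>\<infinity>k\<in>{1..}. Gbar \<psi> h \<omega> \<delta> L i k)
            \<le> \<psi> i 0 + 2 * L * ((\<Sum>\<^sub>\<infinity>j. h i j 0) + (\<Sum>\<^sub>\<infinity>j. L1norm (h i j)) / \<delta>)))"
    (is "?LP \<longrightarrow> ?C")
  proof (rule impI)
    assume lip: "\<forall>i. L-lipschitz_on UNIV (\<psi> i)"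
    have L: "0 \<le> L" using lipschitz_on_nonneg[OF spec[OF lip]] .
    {
      fix \<Gamma> :: "'i \<Rightarrow> nat \<Rightarrow> real"
      assume G: "(\<forall>i k. k \<ge> 1 \<longrightarrow> \<Gamma> i k \<ge> Gbar \<psi> h \<omega> \<delta> L i k) \<and> (\<forall>i. \<Gamma> i summable_on {1..})"
      have Gge: "\<forall>k. k \<ge> 1 \<longrightarrow> \<Gamma> i k \<ge> Gbar \<psi> h \<omega> \<delta> L i k" for i using G by blast
      have Gsm: "\<Gamma> i summable_on {1..}" for i using G by blast
      have "(\<forall>i k. k \<ge> 1 \<longrightarrow>
              (SUP x\<in>confs \<inter> confs_sep \<delta>. ereal (Delta \<psi> h \<omega> \<delta> i k x)) \<le> ereal (\<Gamma> i k))"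
      proof (intro allI impI)
        fix i and k :: nat assume k: "1 \<le> k"
        show "(SUP x\<in>confs \<inter> confs_sep \<delta>. ereal (Delta \<psi> h \<omega> \<delta> i k x)) \<le> ereal (\<Gamma> i k)"
          by (rule part4a[where \<Gamma>=\<Gamma> and i=i, OF spec[OF lip, of i] Gge[of i] k])
      qed
      moreover have "(\<forall>i. (\<Sum>\<^sub>\<infinity>k\<in>{1..}. \<Gamma> i k) \<noteq> 0 \<longrightarrow>
              kalikow_at (Vnest \<omega> \<delta>) (confs_sep \<delta>) (hawkes_phi \<psi> h \<delta>)
                (\<lambda>i v. \<Gamma> i (nbh_idx \<omega> \<delta> i v) / (\<Sum>\<^sub>\<infinity>k\<in>{1..}. \<Gamma> i k))
                (\<lambda>i v x. (\<Sum>\<^sub>\<infinity>k\<in>{1..}. \<Gamma> i k) / \<Gamma> i (nbh_idx \<omega> \<delta> i v)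
                           * Delta_v \<psi> h \<omega> \<delta> i v x) i \<and>
              (\<forall>v\<in>Vnest \<omega> \<delta> i. \<forall>x\<in>confs \<inter> confs_sep \<delta>.
                 (\<Sum>\<^sub>\<infinity>k\<in>{1..}. \<Gamma> i k) / \<Gamma> i (nbh_idx \<omega> \<delta> i v) * Delta_v \<psi> h \<omega> \<delta> i v x
                   \<le> (\<Sum>\<^sub>\<infinity>k\<in>{1..}. \<Gamma> i k)) \<and>
              (\<forall>x\<in>confs \<inter> confs_sep \<delta>. hawkes_phi \<psi> h \<delta> i x \<le> (\<Sum>\<^sub>\<infinity>k\<in>{1..}. \<Gamma> i k)))"
      proof (intro allI impI)
        fix i assume "(\<Sum>\<^sub>\<infinity>k\<in>{1..}. \<Gamma> i k) \<noteq> 0"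
        then show "kalikow_at (Vnest \<omega> \<delta>) (confs_sep \<delta>) (hawkes_phi \<psi> h \<delta>)
                (\<lambda>i v. \<Gamma> i (nbh_idx \<omega> \<delta> i v) / (\<Sum>\<^sub>\<infinity>k\<in>{1..}. \<Gamma> i k))
                (\<lambda>i v x. (\<Sum>\<^sub>\<infinity>k\<in>{1..}. \<Gamma> i k) / \<Gamma> i (nbh_idx \<omega> \<delta> i v)
                           * Delta_v \<psi> h \<omega> \<delta> i v x) i \<and>
              (\<forall>v\<in>Vnest \<omega> \<delta> i. \<forall>x\<in>confs \<inter> confs_sep \<delta>.
                 (\<Sum>\<^sub>\<infinity>k\<in>{1..}. \<Gamma> i k) / \<Gamma> i (nbh_idx \<omega> \<delta> i v) * Delta_v \<psi> h \<omega> \<delta> i v x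
                   \<le> (\<Sum>\<^sub>\<infinity>k\<in>{1..}. \<Gamma> i k)) \<and>
              (\<forall>x\<in>confs \<inter> confs_sep \<delta>. hawkes_phi \<psi> h \<delta> i x \<le> (\<Sum>\<^sub>\<infinity>k\<in>{1..}. \<Gamma> i k))"
          by (rule part4b[where \<Gamma>=\<Gamma> and i=i, OF spec[OF lip, of i] Gge[of i] Gsm[of i]])
      qed
      ultimately have "(\<forall>i k. k \<ge> 1 \<longrightarrow>
              (SUP x\<in>confs \<inter> confs_sep \<delta>. ereal (Delta \<psi> h \<omega> \<delta> i k x)) \<le> ereal (\<Gamma> i k)) \<and>
          (\<forall>i. (\<Sum>\<^sub>\<infinity>k\<in>{1..}. \<Gamma> i k) \<noteq> 0 \<longrightarrow>
              kalikow_at (Vnest \<omega> \<delta>) (confs_sep \<delta>) (hawkes_phi \<psi> h \<delta>)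
                (\<lambda>i v. \<Gamma> i (nbh_idx \<omega> \<delta> i v) / (\<Sum>\<^sub>\<infinity>k\<in>{1..}. \<Gamma> i k))
                (\<lambda>i v x. (\<Sum>\<^sub>\<infinity>k\<in>{1..}. \<Gamma> i k) / \<Gamma> i (nbh_idx \<omega> \<delta> i v)
                           * Delta_v \<psi> h \<omega> \<delta> i v x) i \<and>
              (\<forall>v\<in>Vnest \<omega> \<delta> i. \<forall>x\<in>confs \<inter> confs_sep \<delta>.
                 (\<Sum>\<^sub>\<infinity>k\<in>{1..}. \<Gamma> i k) / \<Gamma> i (nbh_idx \<omega> \<delta> i v) * Delta_v \<psi> h \<omega> \<delta> i v x
                   \<le> (\<Sum>\<^sub>\<infinity>k\<in>{1..}. \<Gamma> i k)) \<and>
              (\<forall>x\<in>confs \<inter> confs_sep \<delta>. hawkes_phi \<psi> h \<delta> i x \<le> (\<Sum>\<^sub>\<infinity>k\<in>{1..}. \<Gamma> i k)))"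
        by (rule conjI)
    }
    note A = this
    have B: "Gbar \<psi> h \<omega> \<delta> L i summable_on {1..} \<and>
          (\<Sum>\<^sub>\<infinity>k\<in>{1..}. Gbar \<psi> h \<omega> \<delta> L i k)
            \<le> \<psi> i 0 + 2 * L * ((\<Sum>\<^sub>\<infinity>j. h i j 0) + (\<Sum>\<^sub>\<infinity>j. L1norm (h i j)) / \<delta>)" for i
      by (rule Gbar_sum[OF L])
    show ?C
      by (rule conjI, (rule allI, rule impI, erule A), (rule allI, rule B))
  qed
  show ?thesis using P1 P2 P3 P4 by (intro conjI)
qed

end
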